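(* Let $H$ be a fractionally $k$-colored digraph on $n$ nodes, and let $\mathbb{L}(H)$ be the random $k$-colored digraph obtained from it. Then $d_\square(H,\mathbb{L}(H))\le \frac{10k}{\sqrt n}$ with probability at least $1-ke^{-n}$.
   Context: A fractionally $k$-colored digraph $H$ on node set $V$ assigns to every ordered pair $(i,j)$ of distinct nodes nonnegative weights $\beta^1_H(i,j),\dots,\beta^k_H(i,j)$ with $\sum_h\beta^h_H(i,j)=1$; a $k$-colored digraph (complete digraph with each ordered pair of distinct nodes colored by one of $1,\dots,k$) is the special case where $\beta^h$ is the indicator of color $h$. The random $k$-colored digraph $\mathbb{L}(H)$ on $V$ colors each pair with color $h$ with probability $\beta^h_H(i,j)$, independently for different pairs. For two fractionally $k$-colored digraphs $H,H'$ on the same node set $V$, $d_\square(H,H')=\frac{1}{|V|^2}\sum_{h=1}^k\max_{S,T\subseteq V}\Bigl|\sum_{i\in S, j\in T}(\beta^h_H(i,j)-\beta^h_{H'}(i,j))\Bigr|$. *)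

theory Defs
  imports "HOL-Probability.Probability"
begin

text \<open>Colors are 1..k. A (fractionally) colored digraph on node set V is given by
  weights beta i j h for ordered pairs (i,j) of distinct nodes of V and colors h.\<close>

definition pairs :: "'a set \<Rightarrow> ('a \<times> 'a) set" where
  "pairs V = {(i, j). i \<in> V \<and> j \<in> V \<and> i \<noteq> j}"

definition frac_colored :: "'a set \<Rightarrow> nat \<Rightarrow> ('a \<Rightarrow> 'a \<Rightarrow> nat \<Rightarrow> real) \<Rightarrow> bool" where
  "frac_colored V k beta \<longleftrightarrow>
     (\<forall>i\<in>V. \<forall>j\<in>V. i \<noteq> j \<longrightarrow>
        (\<forall>h\<in>{1..k}. 0 \<le> beta i j h) \<and> (\<Sum>h=1..k. beta i j h) = 1)"

definition color_pmf :: "nat \<Rightarrow> ('a \<Rightarrow> 'a \<Rightarrow> nat \<Rightarrow> real) \<Rightarrow> 'a \<Rightarrow> 'a \<Rightarrow> nat pmf" where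
  "color_pmf k beta i j = embed_pmf (\<lambda>h. if h \<in> {1..k} then beta i j h else 0)"

text \<open>The random k-colored digraph L(H): independent colors on the pairs; a coloring is
  a function from pairs to colors (value 0 outside the pairs).\<close>
definition random_coloring ::
  "'a set \<Rightarrow> nat \<Rightarrow> ('a \<Rightarrow> 'a \<Rightarrow> nat \<Rightarrow> real) \<Rightarrow> ('a \<times> 'a \<Rightarrow> nat) pmf" where
  "random_coloring V k beta = Pi_pmf (pairs V) 0 (\<lambda>(i, j). color_pmf k beta i j)"

definition coloring_weights :: "('a \<times> 'a \<Rightarrow> nat) \<Rightarrow> 'a \<Rightarrow> 'a \<Rightarrow> nat \<Rightarrow> real" where
  "coloring_weights c i j h = (if c (i, j) = h then 1 else 0)"

text \<open>Cut distance d_box (sum over distinct pairs only, where the weights are defined).\<close>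
definition cut_dist ::
  "'a set \<Rightarrow> nat \<Rightarrow> ('a \<Rightarrow> 'a \<Rightarrow> nat \<Rightarrow> real) \<Rightarrow> ('a \<Rightarrow> 'a \<Rightarrow> nat \<Rightarrow> real) \<Rightarrow> real" where
  "cut_dist V k beta beta' =
     (1 / real (card V) ^ 2) *
     (\<Sum>h=1..k. Max {\<bar>\<Sum>(i, j)\<in>(S \<times> T) \<inter> pairs V. beta i j h - beta' i j h\<bar> | S T.
                       S \<subseteq> V \<and> T \<subseteq> V})"

end

theory Submission
  imports Defs
begin

lemma pmf_color:
  assumes fc: "frac_colored V k beta" and i: "i \<in> V" and j: "j \<in> V" and ij: "i \<noteq> j"
  shows "pmf (color_pmf k beta i j) h = (if h \<in> {1..k} then beta i j h else 0)"
proof -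
  let ?f = "\<lambda>h. if h \<in> {1..k} then beta i j h else 0"
  have nn: "\<And>x. 0 \<le> ?f x" using fc i j ij unfolding frac_colored_def by auto
  have "(\<integral>\<^sup>+x. ennreal (?f x) \<partial>count_space UNIV) = (\<Sum>x\<in>{1..k}. ennreal (?f x))"
    by (rule nn_integral_count_space') auto
  also have "\<dots> = ennreal (\<Sum>x\<in>{1..k}. ?f x)" by (rule sum_ennreal) (rule nn)
  also have "(\<Sum>x\<in>{1..k}. ?f x) = 1" using fc i j ij unfolding frac_colored_def by auto
  finally show ?thesis unfolding color_pmf_def using nn by (subst pmf_embed_pmf) auto
qed

lemma finite_pairs: "finite V \<Longrightarrow> finite (pairs V)"
  by (rule finite_subset[of _ "V \<times> V"]) (auto simp: pairs_def)

lemma component: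
  assumes "finite V" "p \<in> pairs V"
  shows "map_pmf (\<lambda>c. c p) (random_coloring V k beta) = color_pmf k beta (fst p) (snd p)"
  using assms unfolding random_coloring_def
  by (subst Pi_pmf_component) (auto simp: finite_pairs, auto simp: pairs_def split: prod.splits)


lemma expect0:
  assumes fc: "frac_colored V k beta" and fin: "finite V" and p: "p \<in> pairs V" and h: "h \<in> {1..k}"
  shows "measure_pmf.expectation (random_coloring V k beta)
           (\<lambda>c. (\<lambda>(i,j). beta i j h - coloring_weights c i j h) p) = 0"
proof -
  obtain i j where pij: "p = (i,j)" by (cases p)
  have ij: "i \<in> V" "j \<in> V" "i \<noteq> j" using p pij by (auto simp: pairs_def)
  have "measure_pmf.expectation (random_coloring V k beta)
           (\<lambda>c. (\<lambda>(i,j). beta i j h - coloring_weights c i j h) p) =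
        measure_pmf.expectation (map_pmf (\<lambda>c. c p) (random_coloring V k beta))
           (\<lambda>x. beta i j h - indicator {h} x)"
    by (simp add: pij coloring_weights_def indicator_def of_bool_def)
  also have "\<dots> = measure_pmf.expectation (color_pmf k beta i j) (\<lambda>x. beta i j h - indicator {h} x)"
    using component[OF fin p] pij by simp
  also have "\<dots> = beta i j h - pmf (color_pmf k beta i j) h"
    by (subst Bochner_Integration.integral_diff) (auto simp: measure_pmf.emeasure_eq_measure pmf.rep_eq)
  also have "\<dots> = 0" using pmf_color[OF fc ij] h by simp
  finally show ?thesis .
qed
lemma hoeff:
  assumes fc: "frac_colored V k beta" and fin: "finite V" and h: "h \<in> {1..k}"
    and P: "P \<subseteq> pairs V" "P \<noteq> {}" and eps: "\<epsilon> \<ge> 0"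
  shows "measure_pmf.prob (random_coloring V k beta)
     {c. \<epsilon> \<le> \<bar>\<Sum>p\<in>P. (\<lambda>(i,j). beta i j h - coloring_weights c i j h) p\<bar>}
      \<le> 2 * exp (-2 * \<epsilon>\<^sup>2 / real (card P))"
proof -
  let ?R = "random_coloring V k beta"
  define Y where "Y = (\<lambda>p v. (\<lambda>(i,j). beta i j h - (if v = h then 1 else 0::real)) p)"
  define X where "X = (\<lambda>p (c::'a\<times>'a\<Rightarrow>nat). Y p (c p))"
  have finP: "finite P" using finite_subset[OF P(1) finite_pairs[OF fin]] .
  have Xeq: "X p c = (\<lambda>(i,j). beta i j h - coloring_weights c i j h) p" for p c
    unfolding X_def Y_def coloring_weights_def by (cases p) auto
  have mu: "(\<Sum>p\<in>P. measure_pmf.expectation ?R (X p)) = 0"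
    using expect0[OF fc fin _ h] P(1) by (intro sum.neutral) (auto simp: Xeq[abs_def])
  interpret H: Hoeffding_ineq "measure_pmf ?R" P X "\<lambda>p. (\<lambda>(i,j). beta i j h) p - 1"
     "\<lambda>p. (\<lambda>(i,j). beta i j h) p" "\<Sum>p\<in>P. measure_pmf.expectation ?R (X p)"
  proof unfold_locales
    show "finite P" by (rule finP)
    show "prob_space.indep_vars (measure_pmf ?R) (\<lambda>_. borel) X P"
      unfolding X_def random_coloring_def
      by (intro prob_space.indep_vars_compose2[OF _ prob_space.indep_vars_subset[OF _ indep_vars_Pi_pmf]])
         (auto simp: measure_pmf.prob_space_axioms finite_pairs fin P)
    show "AE x in measure_pmf ?R. X p x \<in> {(\<lambda>p. (\<lambda>(i,j). beta i j h) p - 1) p..(\<lambda>p. (\<lambda>(i,j). beta i j h) p) p}" for p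
      by (intro always_eventually) (auto simp: X_def Y_def split: prod.splits)
  qed simp
  have "measure_pmf.prob ?R {x\<in>space (measure_pmf ?R). \<epsilon> \<le> \<bar>(\<Sum>p\<in>P. X p x) - (\<Sum>p\<in>P. measure_pmf.expectation ?R (X p))\<bar>}
     \<le> 2 * exp (-2 * \<epsilon>\<^sup>2 / (\<Sum>p\<in>P. ((\<lambda>p. (\<lambda>(i,j). beta i j h) p) p - ((\<lambda>p. (\<lambda>(i,j). beta i j h) p - 1) p))\<^sup>2))"
    by (rule H.Hoeffding_ineq_abs_ge[OF eps]) (use finP P(2) in \<open>simp add: card_gt_0_iff\<close>)
  then show ?thesis using finP by (simp add: mu Xeq)
qed
lemma arith_bound:
  assumes "n \<ge> (1::nat)"
  shows "2 * (2 ^ n * 2 ^ n) * exp (- 200 * real n) \<le> exp (- real n)"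
proof -
  have e1: "(2::real) \<le> exp 1" using exp_ge_add_one_self[of 1] by simp
  have "(2::real) ^ n \<le> exp 1 ^ n" by (rule power_mono[OF e1]) simp
  also have "exp 1 ^ n = exp (real n)" by (simp add: exp_of_nat_mult[symmetric])
  finally have p: "(2::real) ^ n \<le> exp (real n)" .
  have t: "(2::real) \<le> exp (real n)"
  proof -
    have "(2::real) \<le> real n + 1" using assms by simp
    also have "\<dots> \<le> exp (real n)" using exp_ge_add_one_self[of "real n"] by (simp add: add.commute)
    finally show ?thesis .
  qed
  have "2 * (2 ^ n * 2 ^ n) * exp (- 200 * real n) \<le> exp (real n) * (exp (real n) * exp (real n)) * exp (- 200 * real n)"
    by (intro mult_right_mono mult_mono p t) auto
  also have "\<dots> = exp (- 197 * real n)" by (simp flip: exp_add)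
  also have "\<dots> \<le> exp (- real n)" by simp
  finally show ?thesis .
qed

theorem lemma1:
  fixes V :: "'a set" and k n :: nat and beta :: "'a \<Rightarrow> 'a \<Rightarrow> nat \<Rightarrow> real"
  assumes "finite V" and "card V = n" and "frac_colored V k beta"
  shows "measure_pmf.prob (random_coloring V k beta)
           {c. cut_dist V k beta (coloring_weights c) \<le> 10 * real k / sqrt (real n)}
         \<ge> 1 - real k * exp (- real n)"
proof (cases "n = 0")
  case True
  have "{c. cut_dist V k beta (coloring_weights c) \<le> 10 * real k / sqrt (real n)} = UNIV"
    using True assms(2) by (auto simp: cut_dist_def)
  then show ?thesis by simp
next
  case False
  note fin = assms(1) and fc = assms(3)
  let ?R = "random_coloring V k beta"
  define \<epsilon> where "\<epsilon> = 10 * real n * sqrt (real n)"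
  have epos: "\<epsilon> > 0" using False by (simp add: \<epsilon>_def)
  define E where "E = (\<lambda>(h::nat, S::'a set, T::'a set). {c. \<epsilon> \<le> \<bar>\<Sum>p\<in>(S \<times> T) \<inter> pairs V. (\<lambda>(i,j). beta i j h - coloring_weights c i j h) p\<bar>})"
  define Idx where "Idx = {1..k} \<times> Pow V \<times> Pow V"
  define Bad where "Bad = \<Union> (E ` Idx)"
  have finIdx: "finite Idx" using fin by (simp add: Idx_def)
  have cardIdx: "card Idx = k * (2 ^ n * 2 ^ n)"
    using fin assms(2) by (simp add: Idx_def card_cartesian_product card_Pow)
  have sn: "sqrt (real n) * sqrt (real n) = real n" by simp
  have each: "measure_pmf.prob ?R (E x) \<le> 2 * exp (- 200 * real n)" if x: "x \<in> Idx" for x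
  proof -
    obtain h S T where xe: "x = (h, S, T)" by (cases x) auto
    have h: "h \<in> {1..k}" and ST: "S \<subseteq> V" "T \<subseteq> V" using x xe by (auto simp: Idx_def)
    let ?P = "(S \<times> T) \<inter> pairs V"
    show ?thesis
    proof (cases "?P = {}")
      case True
      then have "E x = {}" using epos by (simp add: E_def xe)
      then show ?thesis by simp
    next
      case ne: False
      have finP: "finite ?P" using fin finite_pairs by blast
      have cP: "real (card ?P) \<le> real n * real n"
      proof -
        have "card ?P \<le> card (V \<times> V)"
          by (rule card_mono) (use fin ST in auto)
        then show ?thesis using assms(2) by (simp add: card_cartesian_product flip: of_nat_mult)
      qed
      have cpos: "real (card ?P) > 0" using finP ne by (simp add: card_gt_0_iff)
      have "measure_pmf.prob ?R (E x) \<le> 2 * exp (-2 * \<epsilon>\<^sup>2 / real (card ?P))"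
        unfolding E_def xe using hoeff[OF fc fin h _ ne] epos by simp
      also have "\<dots> \<le> 2 * exp (- 200 * real n)"
      proof -
        have e2: "\<epsilon>\<^sup>2 = 100 * real n * (real n * real n)"
          unfolding \<epsilon>_def power2_eq_square using sn by (simp add: algebra_simps)
        have "200 * real n * real (card ?P) \<le> 200 * real n * (real n * real n)"
          using cP by (intro mult_left_mono) auto
        then have "- 200 * real n \<ge> -2 * \<epsilon>\<^sup>2 / real (card ?P)"
          using cpos by (simp add: e2 field_simps)
        then show ?thesis by simp
      qed
      finally show ?thesis .
    qed
  qed
  have "measure_pmf.prob ?R Bad \<le> (\<Sum>x\<in>Idx. measure_pmf.prob ?R (E x))"
    unfolding Bad_def by (rule measure_pmf.finite_measure_subadditive_finite[OF finIdx]) auto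
  also have "\<dots> \<le> (\<Sum>x\<in>Idx. 2 * exp (- 200 * real n))" by (rule sum_mono[OF each])
  also have "\<dots> = real k * (2 * (2 ^ n * 2 ^ n) * exp (- 200 * real n))" by (simp add: cardIdx)
  also have "\<dots> \<le> real k * exp (- real n)"
    by (rule mult_left_mono[OF arith_bound]) (use False in auto)
  finally have pB: "measure_pmf.prob ?R Bad \<le> real k * exp (- real n)" .
  have good: "UNIV - Bad \<subseteq> {c. cut_dist V k beta (coloring_weights c) \<le> 10 * real k / sqrt (real n)}"
  proof
    fix c assume c: "c \<in> UNIV - Bad"
    have mx: "Max {\<bar>\<Sum>(i, j)\<in>(S \<times> T) \<inter> pairs V. beta i j h - coloring_weights c i j h\<bar> | S T.
                       S \<subseteq> V \<and> T \<subseteq> V} \<le> \<epsilon>" if h: "h \<in> {1..k}" for h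
    proof -
      have eq: "{\<bar>\<Sum>(i, j)\<in>(S \<times> T) \<inter> pairs V. beta i j h - coloring_weights c i j h\<bar> | S T.
                       S \<subseteq> V \<and> T \<subseteq> V} = (\<lambda>(S,T). \<bar>\<Sum>(i, j)\<in>(S \<times> T) \<inter> pairs V. beta i j h - coloring_weights c i j h\<bar>) ` (Pow V \<times> Pow V)"
        by auto
      have "\<forall>S T. S \<subseteq> V \<and> T \<subseteq> V \<longrightarrow> \<bar>\<Sum>(i, j)\<in>(S \<times> T) \<inter> pairs V. beta i j h - coloring_weights c i j h\<bar> < \<epsilon>"
        using c h by (auto simp: Bad_def Idx_def E_def not_le)
      then show ?thesis unfolding eq using fin
        by (subst Max_le_iff) (auto intro: less_imp_le)
    qed
    have "cut_dist V k beta (coloring_weights c) \<le> (1 / real n ^ 2) * (\<Sum>h=1..k. \<epsilon>)"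
      unfolding cut_dist_def assms(2) by (intro mult_left_mono sum_mono mx) auto
    also have "\<dots> = 10 * real k / sqrt (real n)"
      using False sn unfolding \<epsilon>_def by (simp add: field_simps power2_eq_square)
    finally show "c \<in> {c. cut_dist V k beta (coloring_weights c) \<le> 10 * real k / sqrt (real n)}" by simp
  qed
  have "1 - real k * exp (- real n) \<le> 1 - measure_pmf.prob ?R Bad" using pB by simp
  also have "\<dots> = measure_pmf.prob ?R (UNIV - Bad)"
    using measure_pmf.prob_compl[of Bad ?R] by simp
  also have "\<dots> \<le> measure_pmf.prob ?R {c. cut_dist V k beta (coloring_weights c) \<le> 10 * real k / sqrt (real n)}"
    by (rule measure_pmf.finite_measure_mono[OF good]) simp
  finally show ?thesis .
qed
end
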